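(* Let $l^\top\ge 1$ be an integer, $\varepsilon>0$, $\theta\in\mathbb{R}$, and $\beta=|\mathcal{I}|+1$. Consider datasets in which every sequence has length at most $l^\top$. Then the modified PrivTree for PSTs (described below) with $\lambda\ge\frac{2\beta-1}{\beta-1}\cdot\frac{l^\top}{\varepsilon}$ and $\delta=\lambda\ln\beta$ satisfies $\varepsilon$-differential privacy, where two datasets are neighboring if one is obtained from the other by inserting a single sequence of length at most $l^\top$.
   Context: $\mathrm{Lap}(\lambda)$ is the Laplace distribution with density $\frac{1}{2\lambda}e^{-|y|/\lambda}$. $\mathcal{I}$ is a finite alphabet and $\$,\&$ are special symbols not in $\mathcal{I}$. A sequence is a string $s=\$x_1\cdots x_l$ with each $x_i\in\mathcal{I}\cup\{\&\}$, where $\&$ may occur only as the last symbol; its length is $l$. A dataset is a finite multiset of sequences. A PST node is a string $w$ over $\mathcal{I}\cup\{\$\}$ in which $\$$ can occur only as the first symbol; the root is the empty string; if $w$ does not start with $\$$ its children are $yw$ for $y\in\mathcal{I}\cup\{\$\}$; $\mathrm{depth}(w)$ is the length of $w$. For $x\in\mathcal{I}\cup\{\&\}$, $\mathrm{hist}(w)[x]$ is the total over sequences $\$x_1\cdots x_l$ in $D$ of the number of positions $i\in[1,l]$ with $x_i=x$ such that $w$ is a suffix of $\$x_1\cdots x_{i-1}$. The score is $c(w)=\sum_{x}\mathrm{hist}(w)[x]-\max_{x}\mathrm{hist}(w)[x]$ (over $x\in\mathcal{I}\cup\{\&\}$). Modified PrivTree$(D,\lambda,\theta,\delta)$: start with the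 tree containing only the root, unvisited. While some node $w$ is unvisited: mark it visited; if $w$ starts with $\$$, it is not split; otherwise set $b(w)=\max\{\theta-\delta,\ c(w)-\mathrm{depth}(w)\delta\}$, $\hat b(w)=b(w)+\eta_w$ with $\eta_w\sim\mathrm{Lap}(\lambda)$ fresh and independent, and if $\hat b(w)>\theta$ add all $|\mathcal{I}|+1$ children of $w$ as unvisited nodes. Output: the tree of nodes (strings) only, with all scores and histograms removed. An algorithm $\mathcal{A}$ is $\varepsilon$-differentially private if for all neighboring $D,D'$ and all outputs $O$, $\ln\big(\Pr[\mathcal{A}(D)=O]/\Pr[\mathcal{A}(D')=O]\big)\le\varepsilon$. *)

theory Defs
  imports "HOL-Probability.Probability" "HOL-Library.Sublist"
begin

(* Alphabet I = the finite type 'a.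
   A sequence $x_1...x_l is encoded as the list [x_1,...,x_l] :: 'a option list,
   where Some a encodes the item a \<in> I and None encodes the end symbol &.
   The leading $ is implicit. *)
type_synonym 'a sequence = "'a option list"

definition valid_seq :: "'a sequence \<Rightarrow> bool" where
  "valid_seq s \<longleftrightarrow> None \<notin> set (butlast s)"

definition seq_len :: "'a sequence \<Rightarrow> nat" where
  "seq_len s = length s"

type_synonym 'a dataset = "'a sequence multiset"

(* PST nodes: strings over I \<union> {$}, encoded as 'a option list where None encodes $
   and Some a encodes a \<in> I.  The root is []. Children of w are y # w. *)
type_synonym 'a node = "'a option list"

definition starts_dollar :: "'a node \<Rightarrow> bool" where
  "starts_dollar w \<longleftrightarrow> w \<noteq> [] \<and> hd w = None"

definition depth :: "'a node \<Rightarrow> nat" where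
  "depth w = length w"

(* The string $x_1...x_{i-1} as a node-string: None # take (i-1) s
   (for valid s the x_j, j < l, all lie in I, i.e. are of the form Some a).
   hist(w)[x] for x \<in> I \<union> {&} (x :: 'a option, None = &), with 0-based position i. *)
definition hist :: "'a dataset \<Rightarrow> 'a node \<Rightarrow> 'a option \<Rightarrow> nat" where
  "hist D w x = (\<Sum>s\<in>#D. card {i. i < length s \<and> s ! i = x \<and> suffix w (None # take i s)})"

definition score :: "'a::finite dataset \<Rightarrow> 'a node \<Rightarrow> real" where
  "score D w = real (\<Sum>x\<in>UNIV. hist D w x) - real (Max (range (hist D w)))"

definition bias :: "'a::finite dataset \<Rightarrow> real \<Rightarrow> real \<Rightarrow> 'a node \<Rightarrow> real" where
  "bias D \<theta> \<delta> w = max (\<theta> - \<delta>) (score D w - real (depth w) * \<delta>)"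

definition laplace :: "real \<Rightarrow> real measure" where
  "laplace lam = density lborel (\<lambda>y. ennreal (exp (- \<bar>y\<bar> / lam) / (2 * lam)))"

(* Fresh independent noise for every node: one i.i.d. Laplace variable per possible node.
   (Each node is visited at most once, so pre-sampling is equivalent.) *)
definition noise :: "real \<Rightarrow> ('a node \<Rightarrow> real) measure" where
  "noise lam = PiM UNIV (\<lambda>_. laplace lam)"

inductive_set privtree_tree :: "'a::finite dataset \<Rightarrow> real \<Rightarrow> real \<Rightarrow> ('a node \<Rightarrow> real) \<Rightarrow> 'a node set"
  for D \<theta> \<delta> \<eta> where
  root: "[] \<in> privtree_tree D \<theta> \<delta> \<eta>"
| child: "w \<in> privtree_tree D \<theta> \<delta> \<eta> \<Longrightarrow> \<not> starts_dollar w \<Longrightarrow>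
           bias D \<theta> \<delta> w + \<eta> w > \<theta> \<Longrightarrow> y # w \<in> privtree_tree D \<theta> \<delta> \<eta>"

definition privtree_prob :: "'a::finite dataset \<Rightarrow> real \<Rightarrow> real \<Rightarrow> real \<Rightarrow> 'a node set \<Rightarrow> real" where
  "privtree_prob D lam \<theta> \<delta> Out =
     measure (noise lam) {\<eta> \<in> space (noise lam). privtree_tree D \<theta> \<delta> \<eta> = Out}"

definition bounded_dataset :: "nat \<Rightarrow> 'a dataset \<Rightarrow> bool" where
  "bounded_dataset L D \<longleftrightarrow> (\<forall>s\<in>#D. valid_seq s \<and> seq_len s \<le> L)"

definition neighboring :: "nat \<Rightarrow> 'a dataset \<Rightarrow> 'a dataset \<Rightarrow> bool" where
  "neighboring L D D' \<longleftrightarrow>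
     (\<exists>s. valid_seq s \<and> seq_len s \<le> L \<and> (D' = D + {#s#} \<or> D = D' + {#s#}))"

(* epsilon-DP of a randomized algorithm given by its output probabilities P D O,
   over datasets with sequence lengths bounded by L.
   ln(P D O / P D' O) \<le> eps is rendered multiplicatively. *)
definition differentially_private :: "nat \<Rightarrow> real \<Rightarrow> ('a dataset \<Rightarrow> 'o \<Rightarrow> real) \<Rightarrow> bool" where
  "differentially_private L \<epsilon> P \<longleftrightarrow>
     (\<forall>D D' Out. bounded_dataset L D \<longrightarrow> bounded_dataset L D' \<longrightarrow> neighboring L D D' \<longrightarrow>
        P D Out \<le> exp \<epsilon> * P D' Out)"

end

theory Submission
  imports Defs "HOL-Real_Asymp.Real_Asymp"
begin


definition Sf :: "real \<Rightarrow> real" where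
  "Sf y = (if y \<le> 0 then exp y / 2 else 1 - exp (-y) / 2)"

definition lapf :: "real \<Rightarrow> real \<Rightarrow> real" where
  "lapf lam y = exp (- \<bar>y\<bar> / lam) / (2 * lam)"

lemma lapf_borel[measurable]: "lapf lam \<in> borel_measurable borel"
  unfolding lapf_def by measurable

lemma lap_right:
  assumes lam: "lam > 0" and a: "a \<ge> 0"
  shows "(\<integral>\<^sup>+x. ennreal (lapf lam x) * indicator {a..} x \<partial>lborel) = ennreal (exp (-a/lam) / 2)"
proof -
  have "(\<integral>\<^sup>+x. ennreal (lapf lam x) * indicator {a..} x \<partial>lborel) = 0 - (- exp (-a/lam) / 2)"
  proof (rule nn_integral_FTC_atLeast)
    show "lapf lam \<in> borel_measurable borel" by measurable
    fix x assume x: "a \<le> x"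
    have "((\<lambda>x. - exp (-x/lam) / 2) has_real_derivative (exp (-x/lam) * (1/lam) / 2)) (at x)"
      using lam by (auto intro!: derivative_eq_intros)
    moreover have "lapf lam x = exp (-x/lam) * (1/lam) / 2"
      using x a lam by (simp add: lapf_def)
    ultimately show "((\<lambda>x. - exp (-x/lam) / 2) has_real_derivative lapf lam x) (at x)" by simp
    show "0 \<le> lapf lam x" using lam by (simp add: lapf_def)
  next
    show "((\<lambda>x. - exp (-x/lam) / 2) \<longlongrightarrow> 0) at_top" using lam by real_asymp
  qed
  then show ?thesis by simp
qed

lemma lapf_nonneg: "lam > 0 \<Longrightarrow> 0 \<le> lapf lam x"
  by (simp add: lapf_def)

lemma lapf_even: "lapf lam (-x) = lapf lam x"
  by (simp add: lapf_def)

lemma lap_ind_gt_ge: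
  "(\<integral>\<^sup>+x. ennreal (lapf lam x) * indicator {a<..} x \<partial>lborel) =
   (\<integral>\<^sup>+x. ennreal (lapf lam x) * indicator {a..} x \<partial>lborel)"
  by (rule nn_integral_cong_AE) (use AE_lborel_singleton[of a] in \<open>auto split: split_indicator\<close>)

lemma lap_left:
  assumes lam: "lam > 0" and a: "a \<le> 0"
  shows "(\<integral>\<^sup>+x. ennreal (lapf lam x) * indicator {..<a} x \<partial>lborel) = ennreal (exp (a/lam) / 2)"
proof -
  have "(\<integral>\<^sup>+x. ennreal (lapf lam x) * indicator {..<a} x \<partial>lborel) =
        ennreal \<bar>-1\<bar> * (\<integral>\<^sup>+x. ennreal (lapf lam (0 + -1 * x)) * indicator {..<a} (0 + -1 * x) \<partial>lborel)"
    by (rule nn_integral_real_affine[where f="\<lambda>x. ennreal (lapf lam x) * indicator {..<a} x" and c="-1" and t=0]) auto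
  also have "\<dots> = (\<integral>\<^sup>+x. ennreal (lapf lam x) * indicator {-a<..} x \<partial>lborel)"
    by (simp add: lapf_even, intro nn_integral_cong) (auto split: split_indicator)
  also have "\<dots> = ennreal (exp (-(-a)/lam) / 2)"
    using lap_right[OF lam, of "-a"] a by (simp add: lap_ind_gt_ge)
  finally show ?thesis by simp
qed

lemma laplace_emeasure:
  assumes "A \<in> sets borel"
  shows "emeasure (laplace lam) A = (\<integral>\<^sup>+x. ennreal (lapf lam x) * indicator A x \<partial>lborel)"
  unfolding laplace_def lapf_def[symmetric]
  by (rule emeasure_density) (use assms in auto)

lemma space_laplace[simp]: "space (laplace lam) = UNIV"
  by (simp add: laplace_def)

lemma sets_laplace[simp]: "sets (laplace lam) = sets borel"
  by (simp add: laplace_def)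

lemma lap_split:
  "(\<integral>\<^sup>+x. ennreal (lapf lam x) * indicator A x \<partial>lborel) =
   (\<integral>\<^sup>+x. ennreal (lapf lam x) * indicator (A \<inter> {a..}) x \<partial>lborel) +
   (\<integral>\<^sup>+x. ennreal (lapf lam x) * indicator (A \<inter> {..<a}) x \<partial>lborel)" if "A \<in> sets borel"
proof -
  have "(\<integral>\<^sup>+x. ennreal (lapf lam x) * indicator A x \<partial>lborel) =
     (\<integral>\<^sup>+x. ennreal (lapf lam x) * indicator (A \<inter> {a..}) x + ennreal (lapf lam x) * indicator (A \<inter> {..<a}) x \<partial>lborel)"
    by (intro nn_integral_cong) (auto split: split_indicator)
  also have "\<dots> = (\<integral>\<^sup>+x. ennreal (lapf lam x) * indicator (A \<inter> {a..}) x \<partial>lborel) +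
   (\<integral>\<^sup>+x. ennreal (lapf lam x) * indicator (A \<inter> {..<a}) x \<partial>lborel)"
    by (rule nn_integral_add) (use that in auto)
  finally show ?thesis .
qed

lemma prob_space_laplace:
  assumes lam: "lam > 0" shows "prob_space (laplace lam)"
proof
  have "emeasure (laplace lam) (space (laplace lam)) = (\<integral>\<^sup>+x. ennreal (lapf lam x) * indicator UNIV x \<partial>lborel)"
    by (simp add: laplace_emeasure)
  also have "\<dots> = (\<integral>\<^sup>+x. ennreal (lapf lam x) * indicator {0..} x \<partial>lborel) +
     (\<integral>\<^sup>+x. ennreal (lapf lam x) * indicator {..<0} x \<partial>lborel)"
    using lap_split[of UNIV lam 0] by simp
  also have "\<dots> = ennreal (1/2) + ennreal (1/2)"
    using lap_right[OF lam, of 0] lap_left[OF lam, of 0] by simp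
  also have "\<dots> = 1" by (subst ennreal_plus[symmetric]) auto
  finally show "emeasure (laplace lam) (space (laplace lam)) = 1" .
qed

lemma lap_gt:
  assumes lam: "lam > 0"
  shows "measure (laplace lam) {c<..} = Sf (-c/lam)"
proof (cases "c \<ge> 0")
  case True
  have "emeasure (laplace lam) {c<..} = ennreal (exp (-c/lam) / 2)"
    using lap_right[OF lam True] by (simp add: laplace_emeasure lap_ind_gt_ge)
  then show ?thesis using True lam by (simp add: measure_def Sf_def)
next
  case False
  interpret prob_space "laplace lam" by (rule prob_space_laplace[OF lam])
  have "emeasure (laplace lam) {..c} = (\<integral>\<^sup>+x. ennreal (lapf lam x) * indicator {..<c} x \<partial>lborel)"
    by (simp add: laplace_emeasure) (rule nn_integral_cong_AE, use AE_lborel_singleton[of c] in \<open>auto split: split_indicator\<close>)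
  also have "\<dots> = ennreal (exp (c/lam) / 2)" using lap_left[OF lam] False by simp
  finally have "measure (laplace lam) {..c} = exp (c/lam) / 2" by (simp add: measure_def)
  moreover have "{c<..} = space (laplace lam) - {..c}" by auto
  ultimately have "measure (laplace lam) {c<..} = 1 - exp (c/lam) / 2"
    using prob_compl[of "{..c}"] by simp
  moreover have "c / lam < 0" using False lam by (simp add: divide_neg_pos)
  ultimately show ?thesis by (simp add: Sf_def)
qed

lemma lap_le:
  assumes lam: "lam > 0"
  shows "measure (laplace lam) {..c} = 1 - Sf (-c/lam)"
proof -
  interpret prob_space "laplace lam" by (rule prob_space_laplace[OF lam])
  have "{..c} = space (laplace lam) - {c<..}" by auto
  then show ?thesis using lap_gt[OF lam, of c] prob_compl[of "{c<..}"] by simp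
qed


definition wfO :: "'a node set \<Rightarrow> bool" where
  "wfO T \<longleftrightarrow> [] \<in> T \<and> (\<forall>y v. y # v \<in> T \<longrightarrow> v \<in> T \<and> \<not> starts_dollar v) \<and>
     (\<forall>v\<in>T. (\<exists>y. y # v \<in> T) \<longrightarrow> (\<forall>y. y # v \<in> T))"

definition intO :: "'a node set \<Rightarrow> 'a node \<Rightarrow> bool" where
  "intO T v \<longleftrightarrow> (\<forall>y. y # v \<in> T)"

definition GO :: "'a node set \<Rightarrow> nat \<Rightarrow> 'a node set" where
  "GO T k = {v \<in> T. \<not> starts_dollar v \<and> length v < k}"

definition Aset :: "('a::finite) dataset \<Rightarrow> real \<Rightarrow> real \<Rightarrow> 'a node set \<Rightarrow> 'a node \<Rightarrow> real set" where
  "Aset D \<theta> \<delta> T v = (if intO T v then {\<theta> - bias D \<theta> \<delta> v<..} else {..\<theta> - bias D \<theta> \<delta> v})"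

definition Ev :: "('a::finite) dataset \<Rightarrow> real \<Rightarrow> real \<Rightarrow> 'a node set \<Rightarrow> nat \<Rightarrow> ('a node \<Rightarrow> real) set" where
  "Ev D \<theta> \<delta> T k = {\<eta>. \<forall>v\<in>GO T k. \<eta> v \<in> Aset D \<theta> \<delta> T v}"

lemma tree_parent:
  assumes "y # v \<in> privtree_tree D \<theta> \<delta> \<eta>"
  shows "v \<in> privtree_tree D \<theta> \<delta> \<eta> \<and> \<not> starts_dollar v \<and> bias D \<theta> \<delta> v + \<eta> v > \<theta>"
  using assms by (cases rule: privtree_tree.cases) auto

lemma tree_wf: "wfO (privtree_tree D \<theta> \<delta> \<eta>)"
  unfolding wfO_def
proof (intro conjI)
  show "[] \<in> privtree_tree D \<theta> \<delta> \<eta>" by (rule privtree_tree.root)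
  show "\<forall>y v. y # v \<in> privtree_tree D \<theta> \<delta> \<eta> \<longrightarrow> v \<in> privtree_tree D \<theta> \<delta> \<eta> \<and> \<not> starts_dollar v"
    using tree_parent by blast
  show "\<forall>v\<in>privtree_tree D \<theta> \<delta> \<eta>. (\<exists>y. y # v \<in> privtree_tree D \<theta> \<delta> \<eta>) \<longrightarrow> (\<forall>y. y # v \<in> privtree_tree D \<theta> \<delta> \<eta>)"
  proof (intro ballI impI allI)
    fix v y assume "\<exists>y. y # v \<in> privtree_tree D \<theta> \<delta> \<eta>"
    then obtain z where "z # v \<in> privtree_tree D \<theta> \<delta> \<eta>" by blast
    from tree_parent[OF this] show "y # v \<in> privtree_tree D \<theta> \<delta> \<eta>"
      by (intro privtree_tree.child) auto
  qed
qed

lemma tree_split: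
  assumes "v \<in> privtree_tree D \<theta> \<delta> \<eta>" "\<not> starts_dollar v"
  shows "(\<theta> < bias D \<theta> \<delta> v + \<eta> v) \<longleftrightarrow> intO (privtree_tree D \<theta> \<delta> \<eta>) v"
proof
  assume "\<theta> < bias D \<theta> \<delta> v + \<eta> v"
  then show "intO (privtree_tree D \<theta> \<delta> \<eta>) v"
    unfolding intO_def using assms by (metis privtree_tree.child)
next
  assume "intO (privtree_tree D \<theta> \<delta> \<eta>) v"
  then have "None # v \<in> privtree_tree D \<theta> \<delta> \<eta>" by (simp add: intO_def)
  then show "\<theta> < bias D \<theta> \<delta> v + \<eta> v"
    using tree_parent by blast
qed

lemma tree_eqI:
  assumes wf: "wfO T" and c: "\<And>v. v \<in> T \<Longrightarrow> \<not> starts_dollar v \<Longrightarrow> (\<theta> < bias D \<theta> \<delta> v + \<eta> v) \<longleftrightarrow> intO T v"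
  shows "privtree_tree D \<theta> \<delta> \<eta> = T"
proof
  show "privtree_tree D \<theta> \<delta> \<eta> \<subseteq> T"
  proof
    fix w assume "w \<in> privtree_tree D \<theta> \<delta> \<eta>"
    then show "w \<in> T"
    proof (induction rule: privtree_tree.induct)
      case root then show ?case using wf by (simp add: wfO_def)
    next
      case (child w y)
      then have "intO T w" using c[of w] by blast
      then show ?case by (simp add: intO_def)
    qed
  qed
next
  show "T \<subseteq> privtree_tree D \<theta> \<delta> \<eta>"
  proof
    fix w assume "w \<in> T"
    then show "w \<in> privtree_tree D \<theta> \<delta> \<eta>"
    proof (induction w)
      case Nil show ?case by (rule privtree_tree.root)
    next
      case (Cons y v)
      have w1: "\<forall>y v. y # v \<in> T \<longrightarrow> v \<in> T \<and> \<not> starts_dollar v"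
        and w2: "\<forall>v\<in>T. (\<exists>y. y # v \<in> T) \<longrightarrow> (\<forall>y. y # v \<in> T)"
        using wf unfolding wfO_def by blast+
      from w1 Cons.prems have v: "v \<in> T" "\<not> starts_dollar v" by blast+
      from w2 Cons.prems v have "intO T v" unfolding intO_def by blast
      with c[OF v] have "\<theta> < bias D \<theta> \<delta> v + \<eta> v" by simp
      with Cons.IH[OF v(1)] v(2) show ?case by (rule privtree_tree.child)
    qed
  qed
qed

lemma space_noise[simp]: "space (noise lam) = UNIV"
  by (simp add: noise_def space_PiM)

lemma event_eq:
  assumes wf: "wfO T"
  shows "{\<eta> \<in> space (noise lam). privtree_tree D \<theta> \<delta> \<eta> = T} = (\<Inter>k. Ev D \<theta> \<delta> T k)"
proof (intro set_eqI iffI)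
  fix \<eta> assume "\<eta> \<in> {\<eta> \<in> space (noise lam). privtree_tree D \<theta> \<delta> \<eta> = T}"
  then have t: "privtree_tree D \<theta> \<delta> \<eta> = T" by simp
  show "\<eta> \<in> (\<Inter>k. Ev D \<theta> \<delta> T k)"
  proof
    fix k
    { fix v assume v: "v \<in> GO T k"
      then have "(\<theta> < bias D \<theta> \<delta> v + \<eta> v) \<longleftrightarrow> intO T v"
        using tree_split[of v D \<theta> \<delta> \<eta>] t by (auto simp: GO_def)
      then have "\<eta> v \<in> Aset D \<theta> \<delta> T v" by (auto simp: Aset_def) }
    then show "\<eta> \<in> Ev D \<theta> \<delta> T k" by (auto simp: Ev_def)
  qed
next
  fix \<eta> assume "\<eta> \<in> (\<Inter>k. Ev D \<theta> \<delta> T k)"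
  then have "\<And>v. v \<in> T \<Longrightarrow> \<not> starts_dollar v \<Longrightarrow> \<eta> v \<in> Aset D \<theta> \<delta> T v"
    by (auto simp: Ev_def GO_def)
  then have "privtree_tree D \<theta> \<delta> \<eta> = T"
  proof (intro tree_eqI[OF wf])
    fix v assume "\<And>v. v \<in> T \<Longrightarrow> \<not> starts_dollar v \<Longrightarrow> \<eta> v \<in> Aset D \<theta> \<delta> T v" "v \<in> T" "\<not> starts_dollar v"
    then have "\<eta> v \<in> Aset D \<theta> \<delta> T v" by blast
    then show "(\<theta> < bias D \<theta> \<delta> v + \<eta> v) \<longleftrightarrow> intO T v"
      by (auto simp: Aset_def split: if_splits)
  qed
  then show "\<eta> \<in> {\<eta> \<in> space (noise lam). privtree_tree D \<theta> \<delta> \<eta> = T}" by simp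
qed

lemma event_empty:
  assumes "\<not> wfO T"
  shows "{\<eta> \<in> space (noise lam). privtree_tree D \<theta> \<delta> \<eta> = T} = {}"
  using assms tree_wf by auto

lemma finite_GO: "finite (GO (T :: 'a::finite node set) k)"
proof -
  have "GO T k \<subseteq> {xs. set xs \<subseteq> UNIV \<and> length xs \<le> k}" by (auto simp: GO_def)
  moreover have "finite {xs :: 'a option list. set xs \<subseteq> UNIV \<and> length xs \<le> k}"
    by (rule finite_lists_length_le) simp
  ultimately show ?thesis by (rule finite_subset)
qed

lemma noise_pps: "lam > 0 \<Longrightarrow> product_prob_space (\<lambda>_. laplace lam)"
  by (simp add: product_prob_space_def product_prob_space_axioms_def product_sigma_finite_def
      prob_space_laplace prob_space_imp_sigma_finite)

lemma Ev_emb: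
  "Ev D \<theta> \<delta> T k = prod_emb UNIV (\<lambda>_. laplace lam) (GO T k) (Pi\<^sub>E (GO T k) (Aset D \<theta> \<delta> T))"
  by (auto simp: Ev_def prod_emb_def PiE_def Pi_def extensional_def)

lemma Aset_sets: "Aset D \<theta> \<delta> T v \<in> sets borel"
  by (simp add: Aset_def)

lemma measure_Ev:
  assumes lam: "lam > 0"
  shows "measure (noise lam) (Ev D \<theta> \<delta> T k) = (\<Prod>v\<in>GO T k. measure (laplace lam) (Aset D \<theta> \<delta> T v))"
proof -
  interpret product_prob_space "\<lambda>_. laplace lam" UNIV by (rule noise_pps[OF lam])
  show ?thesis unfolding Ev_emb[where lam=lam] noise_def
    by (rule measure_PiM_emb) (auto simp: finite_GO Aset_sets)
qed

lemma Ev_sets: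
  assumes lam: "lam > 0"
  shows "Ev D \<theta> \<delta> T k \<in> sets (noise lam)"
proof -
  interpret product_prob_space "\<lambda>_. laplace lam" UNIV by (rule noise_pps[OF lam])
  show ?thesis unfolding Ev_emb[where lam=lam] noise_def
    by (rule sets_PiM_I) (auto simp: finite_GO Aset_sets)
qed

lemma Ev_decseq: "decseq (Ev D \<theta> \<delta> T)"
  unfolding decseq_def Ev_def GO_def by auto

lemma ev_transfer:
  assumes lam: "lam > 0"
    and H: "\<And>k. wfO T \<Longrightarrow> (\<Prod>v\<in>GO T k. measure (laplace lam) (Aset D0 \<theta> \<delta> T v))
               \<le> exp c * (\<Prod>v\<in>GO T k. measure (laplace lam) (Aset D1 \<theta> \<delta> T v))"
  shows "privtree_prob D0 lam \<theta> \<delta> T \<le> exp c * privtree_prob D1 lam \<theta> \<delta> T"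
proof (cases "wfO T")
  case False
  then show ?thesis unfolding privtree_prob_def event_empty[OF False] by simp
next
  case True
  interpret product_prob_space "\<lambda>_. laplace lam" UNIV by (rule noise_pps[OF lam])
  have pn: "prob_space (noise lam)" unfolding noise_def by (rule P.prob_space_axioms)
  then interpret N: prob_space "noise lam" .
  have lim: "(\<lambda>k. measure (noise lam) (Ev D1 \<theta> \<delta> T k)) \<longlonglongrightarrow> measure (noise lam) (\<Inter>k. Ev D1 \<theta> \<delta> T k)"
    by (rule N.finite_Lim_measure_decseq) (auto simp: Ev_sets[OF lam] Ev_decseq)
  have "privtree_prob D0 lam \<theta> \<delta> T \<le> exp c * privtree_prob D1 lam \<theta> \<delta> T"
    unfolding privtree_prob_def event_eq[OF True]
  proof (rule LIMSEQ_le_const[OF tendsto_mult_left[OF lim]], intro exI allI impI)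
    fix k :: nat
    have "measure (noise lam) (\<Inter>k. Ev D0 \<theta> \<delta> T k) \<le> measure (noise lam) (Ev D0 \<theta> \<delta> T k)"
      by (rule N.finite_measure_mono) (auto simp: Ev_sets[OF lam])
    also have "\<dots> \<le> exp c * measure (noise lam) (Ev D1 \<theta> \<delta> T k)"
      using H[of k, OF True] by (simp add: measure_Ev[OF lam])
    finally show "measure (noise lam) (\<Inter>k. Ev D0 \<theta> \<delta> T k) \<le> exp c * measure (noise lam) (Ev D1 \<theta> \<delta> T k)" .
  qed
  then show ?thesis .
qed


definition cnt :: "'a sequence \<Rightarrow> 'a node \<Rightarrow> 'a option \<Rightarrow> nat" where
  "cnt r w x = card {i. i < length r \<and> r ! i = x \<and> suffix w (None # take i r)}"

lemma hist_add: "hist (add_mset r D) w x = hist D w x + cnt r w x"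
  by (simp add: hist_def cnt_def)

lemma hist_empty_seq: "hist (add_mset [] D) w x = hist D w x"
  by (simp add: hist_add cnt_def)

lemma cnt_snoc:
  "cnt (r @ [y]) w x = cnt r w x + (if x = y \<and> suffix w (None # r) then 1 else 0)"
proof -
  have eq: "{i. i < length (r @ [y]) \<and> (r @ [y]) ! i = x \<and> suffix w (None # take i (r @ [y]))}
    = {i. i < length r \<and> r ! i = x \<and> suffix w (None # take i r)} \<union>
      (if x = y \<and> suffix w (None # r) then {length r} else {})"
    by (auto simp: nth_append less_Suc_eq)
  show ?thesis unfolding cnt_def eq
    by (auto simp: card_insert_if)
qed

lemma hist_step:
  assumes "t < length s"
  shows "hist (D + {#take (Suc t) s#}) w x = hist (D + {#take t s#}) w x +
           (if x = s ! t \<and> suffix w (None # take t s) then 1 else 0)"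
  using assms by (simp add: hist_add take_Suc_conv_app_nth cnt_snoc)

lemma hist_mono: "hist D (y # w) x \<le> hist D w x"
proof -
  have "card {i. i < length s \<and> s ! i = x \<and> suffix (y # w) (None # take i s)}
     \<le> card {i. i < length s \<and> s ! i = x \<and> suffix w (None # take i s)}" for s :: "'a sequence"
    by (rule card_mono) (auto dest: suffix_ConsD)
  then show ?thesis unfolding hist_def by (intro sum_mset_mono) auto
qed

definition sc :: "('b::finite \<Rightarrow> nat) \<Rightarrow> real" where
  "sc h = real (\<Sum>x\<in>UNIV. h x) - real (Max (range h))"

lemma score_sc: "score D w = sc (hist D w)"
  by (simp add: score_def sc_def)

lemma sc_mono:
  fixes h h' :: "'b::finite \<Rightarrow> nat"
  assumes le: "\<And>x. h x \<le> h' x"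
  shows "sc h \<le> sc h'"
proof -
  have "Max (range h') \<in> range h'" by (rule Max_in) auto
  then obtain x' where x': "h' x' = Max (range h')" by (metis rangeE)
  have "h x' \<le> Max (range h)" by (rule Max_ge) auto
  have "(\<Sum>x\<in>UNIV. h' x) = h' x' + (\<Sum>x\<in>UNIV - {x'}. h' x)"
    by (subst sum.remove[of UNIV x']) auto
  moreover have "(\<Sum>x\<in>UNIV. h x) = h x' + (\<Sum>x\<in>UNIV - {x'}. h x)"
    by (subst sum.remove[of UNIV x']) auto
  moreover have "(\<Sum>x\<in>UNIV - {x'}. h x) \<le> (\<Sum>x\<in>UNIV - {x'}. h' x)"
    by (rule sum_mono) (rule le)
  ultimately show ?thesis unfolding sc_def using \<open>h x' \<le> Max (range h)\<close> x' by linarith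
qed

lemma sc_unit:
  fixes h :: "'b::finite \<Rightarrow> nat"
  shows "sc (\<lambda>x. h x + (if x = y then 1 else 0)) \<le> sc h + 1"
proof -
  have "(\<Sum>x\<in>UNIV. h x + (if x = y then 1 else 0)) = (\<Sum>x\<in>UNIV. h x) + 1"
    by (simp add: sum.distrib)
  moreover have "Max (range h) \<le> Max (range (\<lambda>x. h x + (if x = y then 1 else 0)))"
  proof -
    have "Max (range h) \<in> range h" by (rule Max_in) auto
    then obtain x' where x': "h x' = Max (range h)" by (metis rangeE)
    have "h x' \<le> h x' + (if x' = y then 1 else 0)" by simp
    also have "\<dots> \<le> Max (range (\<lambda>x. h x + (if x = y then 1 else 0)))" by (rule Max_ge) auto
    finally show ?thesis using x' by simp
  qed
  ultimately show ?thesis unfolding sc_def by simp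
qed

lemma score_child: "score D (y # w) \<le> score D w"
  unfolding score_sc by (rule sc_mono) (rule hist_mono)

lemma score_step:
  assumes "t < length s"
  shows "score (D + {#take t s#}) w \<le> score (D + {#take (Suc t) s#}) w"
    "score (D + {#take (Suc t) s#}) w \<le> score (D + {#take t s#}) w + 1"
    "\<not> suffix w (None # take t s) \<Longrightarrow> score (D + {#take (Suc t) s#}) w = score (D + {#take t s#}) w"
proof -
  note hs = hist_step[OF assms, of D w]
  show "score (D + {#take t s#}) w \<le> score (D + {#take (Suc t) s#}) w"
    unfolding score_sc by (rule sc_mono) (subst hs, simp)
  show "score (D + {#take (Suc t) s#}) w \<le> score (D + {#take t s#}) w + 1"
  proof (cases "suffix w (None # take t s)")
    case True
    then have "hist (D + {#take (Suc t) s#}) w = (\<lambda>x. hist (D + {#take t s#}) w x + (if x = s ! t then 1 else 0))"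
      using True by (intro ext, subst hs, simp)
    then show ?thesis unfolding score_sc by (simp only:) (rule sc_unit)
  next
    case False
    then have "hist (D + {#take (Suc t) s#}) w = hist (D + {#take t s#}) w" by (intro ext, subst hs, simp)
    then show ?thesis unfolding score_sc by simp
  qed
  show "\<not> suffix w (None # take t s) \<Longrightarrow> score (D + {#take (Suc t) s#}) w = score (D + {#take t s#}) w"
  proof -
    assume "\<not> suffix w (None # take t s)"
    then have "hist (D + {#take (Suc t) s#}) w = hist (D + {#take t s#}) w" by (intro ext, subst hs, simp)
    then show ?thesis unfolding score_sc by simp
  qed
qed

lemma score_empty_seq: "score (D + {#[]#}) w = score D w"
proof -
  have "hist (D + {#[]#}) w = hist D w" using hist_empty_seq[of D w] by auto
  then show ?thesis unfolding score_sc by simp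
qed


lemma exp_half_ineq: "1 - exp (-y) / 2 \<le> exp y / 2" for y :: real
proof -
  define u where "u = exp y"
  have u: "u > 0" by (simp add: u_def)
  have "0 \<le> (u - 1) * (u - 1)" by simp
  then have "2 * u - 1 \<le> u * u" by (simp add: algebra_simps)
  then have "(2 * u - 1) / u \<le> u" using u by (simp add: divide_le_eq)
  then have "2 - 1 / u \<le> u" using u by (simp add: diff_divide_distrib)
  moreover have "exp (-y) = 1 / u" by (simp add: u_def exp_minus divide_inverse)
  ultimately show ?thesis by (simp add: u_def)
qed

lemma Sf_pos: "0 < Sf y"
proof (cases "y \<le> 0")
  case False
  then have "exp (-y) < 1" by simp
  then have "1 - exp (-y) / 2 > 0" by linarith
  then show ?thesis using False by (simp add: Sf_def)
qed (simp add: Sf_def)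

lemma Sf_le1: "Sf y \<le> 1"
proof (cases "y \<le> 0")
  case True
  then have "exp y \<le> 1" by simp
  then have "exp y / 2 \<le> 1" by linarith
  then show ?thesis using True by (simp add: Sf_def)
qed (simp add: Sf_def)

lemma Sf_minmax: "Sf y = min (exp y / 2) (max (1/2) (1 - exp (-y) / 2))"
proof (cases "y \<le> 0")
  case True
  then have "exp (-y) \<ge> 1" by simp
  moreover have "exp y \<le> 1" using True by simp
  ultimately show ?thesis using True by (auto simp: Sf_def min_def max_def)
next
  case False
  then have "exp (-y) \<le> 1" by simp
  then show ?thesis using False exp_half_ineq[of y] by (auto simp: Sf_def min_def max_def)
qed

lemma Sf_cont: "continuous_on A Sf"
  unfolding Sf_minmax[abs_def] by (intro continuous_intros) auto

lemma Sf_mono: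
  assumes yz: "y \<le> z" shows "Sf y \<le> Sf z"
proof -
  consider "z \<le> 0" | "y \<le> 0" "0 < z" | "0 < y" using yz by linarith
  then show ?thesis
  proof cases
    case 1 then show ?thesis using yz by (simp add: Sf_def)
  next
    case 2
    have "exp y \<le> 1" "exp (-z) \<le> 1" using 2 by auto
    then have "exp y / 2 \<le> 1 - exp (-z) / 2" by linarith
    then show ?thesis using 2 by (simp add: Sf_def)
  next
    case 3
    have "exp (-z) \<le> exp (-y)" using yz by simp
    then show ?thesis using 3 yz by (simp add: Sf_def)
  qed
qed

lemma Sf_neg: "Sf (-y) = 1 - Sf y"
  by (auto simp: Sf_def)

lemma Sf_shift:
  assumes d: "d \<ge> 0"
  shows "Sf z \<le> exp d * Sf (z - d)"
proof (cases "z \<le> 0")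
  case True
  then show ?thesis using d by (simp add: Sf_def exp_diff)
next
  case False
  note z = this
  show ?thesis
  proof (cases "z - d \<le> 0")
    case True
    then have "exp d * Sf (z - d) = exp z / 2" by (simp add: Sf_def exp_diff)
    then show ?thesis using z exp_half_ineq[of z] by (simp add: Sf_def)
  next
    case False
    define v where "v = exp d"
    define w where "w = exp (-z)"
    have v1: "v \<ge> 1" using d by (simp add: v_def)
    have wv: "w * v \<le> 1" using False by (simp add: v_def w_def flip: exp_add)
    have w0: "w \<ge> 0" by (simp add: w_def)
    have eq: "exp (-(z - d)) = w * v" by (simp add: v_def w_def flip: exp_add)
    have "(v - 1) * (1 - w * (v + 1) / 2) \<ge> 0"
    proof (rule mult_nonneg_nonneg)
      show "v - 1 \<ge> 0" using v1 by simp
      have "w * 1 \<le> w * v" using v1 w0 by (rule mult_left_mono)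
      then have "w * (v + 1) \<le> 2" using wv by (simp add: algebra_simps)
      then show "1 - w * (v + 1) / 2 \<ge> 0" by simp
    qed
    then have "1 - w / 2 \<le> v * (1 - w * v / 2)" by (auto simp: algebra_simps diff_divide_distrib)
    moreover have "exp (d - z) = exp (-z) * exp d" by (simp flip: exp_add)
    ultimately show ?thesis using z False by (simp add: Sf_def v_def w_def)
  qed
qed

definition ps :: "real \<Rightarrow> real \<Rightarrow> real" where
  "ps Lb t = - ln (Sf (max (- Lb) t))"

lemma exp_neg_ps: "exp (- ps Lb t) = Sf (max (- Lb) t)"
  by (simp add: ps_def Sf_pos)

definition dps :: "real \<Rightarrow> real \<Rightarrow> real" where
  "dps Lb t = (if t < - Lb then 0 else if t < 0 then -1 else - (exp (-t) / 2) / (1 - exp (-t) / 2))"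

lemma ps_cont: "continuous_on A (ps Lb)"
proof -
  have c: "continuous_on A (\<lambda>t. Sf (max (- Lb) t))"
    by (rule continuous_on_compose2[OF Sf_cont[of UNIV]]) (auto intro!: continuous_intros)
  have nz: "\<forall>x\<in>A. Sf (max (- Lb) x) \<noteq> 0" using Sf_pos by (metis less_irrefl)
  have "continuous_on A (\<lambda>x. - ln (Sf (max (- Lb) x)))"
    by (rule continuous_on_minus[OF continuous_on_ln[OF c nz]])
  then show ?thesis unfolding ps_def[abs_def] .
qed

lemma ps_deriv:
  assumes Lb: "Lb > 0" and t: "t \<noteq> - Lb" "t \<noteq> 0"
  shows "(ps Lb has_real_derivative dps Lb t) (at t)"
proof -
  consider "t < - Lb" | "- Lb < t" "t < 0" | "0 < t" using t by linarith
  then show ?thesis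
  proof cases
    case 1
    have d0: "((\<lambda>_. - ln (Sf (- Lb))) has_real_derivative 0) (at t)" by simp
    have "dps Lb t = 0" using 1 by (simp add: dps_def)
    with d0 have d: "((\<lambda>_. - ln (Sf (- Lb))) has_real_derivative dps Lb t) (at t)" by simp
    have e: "- ln (Sf (- Lb)) = ps Lb x" if "x \<in> {..< - Lb}" for x
      using that by (simp add: ps_def max_def)
    show ?thesis
      by (rule has_field_derivative_transform_within_open[OF d, of "{..< - Lb}"]) (simp_all add: 1 e)
  next
    case 2
    have d0: "((\<lambda>x. ln 2 - x) has_real_derivative -1) (at t)"
      by (auto intro!: derivative_eq_intros)
    have "dps Lb t = -1" using 2 by (simp add: dps_def)
    with d0 have d: "((\<lambda>x. ln 2 - x) has_real_derivative dps Lb t) (at t)" by simp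
    have e: "ln 2 - x = ps Lb x" if x: "x \<in> {- Lb<..<0}" for x
    proof -
      have "max (- Lb) x = x" using x by simp
      moreover have "x \<le> 0" using x by simp
      ultimately have "ps Lb x = - ln (exp x / 2)" by (simp add: ps_def Sf_def)
      also have "\<dots> = ln 2 - x" by (simp add: ln_div)
      finally show ?thesis by simp
    qed
    show ?thesis
      by (rule has_field_derivative_transform_within_open[OF d, of "{- Lb<..<0}"]) (simp_all add: 2 e)
  next
    case 3
    have pos: "0 < 1 - exp (-x) / 2" if "x > 0" for x :: real
    proof -
      have "exp (-x) < 1" using that by simp
      then show ?thesis by linarith
    qed
    have d0: "((\<lambda>x. - ln (1 - exp (-x) / 2)) has_real_derivative
               - (- (- exp (-t) / 2) / (1 - exp (-t) / 2))) (at t)"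
      by (rule derivative_eq_intros refl | use pos[OF 3] in simp)+
    have "dps Lb t = - (- (- exp (-t) / 2) / (1 - exp (-t) / 2))"
      using 3 Lb by (simp add: dps_def)
    with d0 have d: "((\<lambda>x. - ln (1 - exp (-x) / 2)) has_real_derivative dps Lb t) (at t)" by simp
    have e: "- ln (1 - exp (-x) / 2) = ps Lb x" if x: "x \<in> {0<..}" for x
    proof -
      have "max (- Lb) x = x" using x Lb by simp
      then show ?thesis using x by (simp add: ps_def Sf_def)
    qed
    show ?thesis
      by (rule has_field_derivative_transform_within_open[OF d, of "{0<..}"]) (simp_all add: 3 e)
  qed
qed


lemma dps_bounds:
  assumes Lb: "Lb > 0"
  shows "0 \<le> - dps Lb t" "- dps Lb t \<le> 1" "t < - Lb \<Longrightarrow> - dps Lb t = 0"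
    "t \<ge> 0 \<Longrightarrow> - dps Lb t \<le> exp (-t)"
proof -
  have A: "0 \<le> - dps Lb t \<and> - dps Lb t \<le> exp (-t)" if t0: "t \<ge> 0"
  proof -
    define e where "e = exp (-t)"
    have e1: "e \<le> 1" "e > 0" using t0 by (auto simp: e_def)
    have den: "1 - e / 2 \<ge> 1/2" using e1 by simp
    have "- dps Lb t = (e / 2) / (1 - e / 2)" using t0 Lb by (simp add: dps_def e_def)
    also have "\<dots> \<le> (e / 2) / (1/2)"
      by (rule divide_left_mono) (use e1 den in auto)
    also have "\<dots> = e" by simp
    finally have "- dps Lb t \<le> e" .
    moreover have "0 \<le> (e / 2) / (1 - e / 2)" using e1 den by simp
    ultimately show ?thesis using t0 Lb by (simp add: dps_def e_def)
  qed
  show "0 \<le> - dps Lb t"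
    using A by (cases "t \<ge> 0") (auto simp: dps_def)
  show "- dps Lb t \<le> 1"
  proof (cases "t \<ge> 0")
    case True
    then have "exp (-t) \<le> 1" by simp
    then show ?thesis using A[OF True] by linarith
  qed (auto simp: dps_def)
  show "t < - Lb \<Longrightarrow> - dps Lb t = 0" by (simp add: dps_def)
  show "t \<ge> 0 \<Longrightarrow> - dps Lb t \<le> exp (-t)" using A by blast
qed

definition Kc :: "real \<Rightarrow> real" where "Kc Lb = 1 / (1 - exp (- Lb))"

lemma Kc_facts:
  assumes Lb: "Lb > 0"
  shows "Kc Lb \<ge> 1" "Kc Lb = 1 + Kc Lb * exp (- Lb)"
proof -
  have e: "exp (-Lb) < 1" "exp (-Lb) > 0" using Lb by auto
  show "Kc Lb \<ge> 1" using e by (simp add: Kc_def)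
  show "Kc Lb = 1 + Kc Lb * exp (- Lb)" using e by (simp add: Kc_def field_simps)
qed

definition bnd :: "real \<Rightarrow> real \<Rightarrow> real" where
  "bnd Lb t = (if t \<ge> 0 then Kc Lb * exp (-t) else 1 + Kc Lb)"

lemma bnd_le: "Lb > 0 \<Longrightarrow> bnd Lb t \<le> 1 + Kc Lb"
proof -
  assume Lb: "Lb > 0"
  have "Kc Lb * exp (-t) \<le> Kc Lb * 1" if "t \<ge> 0"
    using that Kc_facts(1)[OF Lb] by (intro mult_left_mono) auto
  then show ?thesis by (auto simp: bnd_def)
qed

lemma sum_dps_bound:
  assumes Lb: "Lb > 0" and inc: "\<And>j. t (Suc j) \<ge> t j + Lb"
  shows "(\<Sum>j\<le>n. - dps Lb (t j)) \<le> bnd Lb (t 0)"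
  using inc
proof (induction n arbitrary: t)
  case 0
  note B = dps_bounds[OF Lb, of "t 0"]
  show ?case
  proof (cases "t 0 \<ge> 0")
    case True
    have "Kc Lb * exp (- t 0) \<ge> 1 * exp (- t 0)"
      using Kc_facts(1)[OF Lb] by (intro mult_right_mono) auto
    then have "- dps Lb (t 0) \<le> Kc Lb * exp (- t 0)" using B(4)[OF True] by linarith
    then show ?thesis using True by (simp add: bnd_def)
  next
    case False
    then show ?thesis using B(2) Kc_facts(1)[OF Lb] by (simp add: bnd_def)
  qed
next
  case (Suc n)
  have IH: "(\<Sum>j\<le>n. - dps Lb (t (Suc j))) \<le> bnd Lb (t 1)"
    using Suc.IH[of "\<lambda>j. t (Suc j)"] Suc.prems by simp
  have sp: "(\<Sum>j\<le>Suc n. - dps Lb (t j)) = - dps Lb (t 0) + (\<Sum>j\<le>n. - dps Lb (t (Suc j)))"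
    by (subst sum.atMost_Suc_shift) simp
  note B = dps_bounds[OF Lb, of "t 0"]
  have t1: "t 1 \<ge> t 0 + Lb" using Suc.prems[of 0] by simp
  consider "t 0 \<ge> 0" | "t 0 < - Lb" | "- Lb \<le> t 0" "t 0 < 0" by linarith
  then show ?case
  proof cases
    case 1
    have t1p: "t 1 \<ge> 0" using t1 1 Lb by linarith
    have "exp (- t 1) \<le> exp (- t 0 - Lb)" using t1 by simp
    then have "Kc Lb * exp (- t 1) \<le> Kc Lb * (exp (- t 0) * exp (- Lb))"
      using Kc_facts(1)[OF Lb] by (intro mult_left_mono) (auto simp: exp_diff exp_minus field_simps)
    then have "bnd Lb (t 1) \<le> exp (- t 0) * (Kc Lb * exp (- Lb))"
      using t1p by (simp add: bnd_def algebra_simps)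
    then have "- dps Lb (t 0) + (\<Sum>j\<le>n. - dps Lb (t (Suc j))) \<le> exp (- t 0) * (1 + Kc Lb * exp (- Lb))"
      using IH B(4)[OF 1] by (simp add: algebra_simps)
    also have "\<dots> = Kc Lb * exp (- t 0)" using Kc_facts(2)[OF Lb] by simp
    finally show ?thesis using sp 1 by (simp add: bnd_def)
  next
    case 2
    then show ?thesis using sp B(3)[OF 2] IH bnd_le[OF Lb, of "t 1"] Lb
      by (simp add: bnd_def)
  next
    case 3
    have t1p: "t 1 \<ge> 0" using t1 3 by linarith
    have "Kc Lb * exp (- t 1) \<le> Kc Lb * 1"
      using t1p Kc_facts(1)[OF Lb] by (intro mult_left_mono) auto
    then have "bnd Lb (t 1) \<le> Kc Lb" using t1p by (simp add: bnd_def)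
    then show ?thesis using sp B(2) IH 3 by (simp add: bnd_def)
  qed
qed

lemma sum_dps_ge:
  assumes Lb: "Lb > 0" and inc: "\<And>j. d (Suc j) \<ge> d j + Lb"
  shows "(\<Sum>j\<le>n. dps Lb (s + d j)) \<ge> - (1 + Kc Lb)"
proof -
  have "(\<Sum>j\<le>n. - dps Lb (s + d j)) \<le> bnd Lb (s + d 0)"
    by (rule sum_dps_bound[OF Lb]) (use inc in auto)
  also have "\<dots> \<le> 1 + Kc Lb" by (rule bnd_le[OF Lb])
  finally show ?thesis by (simp add: sum_negf)
qed

lemma cost_chain:
  assumes Lb: "Lb > 0" and a: "a \<ge> 0" and inc: "\<And>j. d (Suc j) \<ge> d j + Lb"
  shows "(\<Sum>j\<le>n. ps Lb (d j - a) - ps Lb (d j)) \<le> a * (1 + Kc Lb)"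
proof -
  define f where "f s = (\<Sum>j\<le>n. ps Lb (s + d j))" for s
  define f' where "f' s = (\<Sum>j\<le>n. dps Lb (s + d j))" for s
  define S where "S = (\<lambda>j. - Lb - d j) ` {..n} \<union> (\<lambda>j. - d j) ` {..n}"
  have I1: "(f' has_integral (f 0 - f (-a))) {-a..0}"
  proof (rule fundamental_theorem_of_calculus_strong)
    show "finite S" by (simp add: S_def)
    show "-a \<le> 0" using a by simp
    show "continuous_on {-a..0} f" unfolding f_def
      by (intro continuous_on_sum continuous_on_compose2[OF ps_cont[of UNIV]]) (auto intro!: continuous_intros)
    fix x assume x: "x \<in> {-a..0} - S"
    have "((\<lambda>s. f s) has_real_derivative f' x) (at x)"
      unfolding f_def f'_def
    proof (rule DERIV_sum)
      fix j assume j: "j \<in> {..n}"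
      have "- Lb - d j \<in> S" "- d j \<in> S" using j by (auto simp: S_def)
      then have "x \<noteq> - Lb - d j" "x \<noteq> - d j" using x by auto
      then have "x + d j \<noteq> - Lb" "x + d j \<noteq> 0" by linarith+
      from ps_deriv[OF Lb this] have "(ps Lb has_real_derivative dps Lb (x + d j)) (at (x + d j))" .
      then show "((\<lambda>s. ps Lb (s + d j)) has_real_derivative dps Lb (x + d j)) (at x)"
      proof -
        have "((\<lambda>s. s + d j) has_real_derivative 1) (at x)" by (auto intro!: derivative_eq_intros)
        from DERIV_chain2[OF \<open>(ps Lb has_real_derivative _) _\<close> this]
        show ?thesis by simp
      qed
    qed
    then show "(f has_vector_derivative f' x) (at x)"
      by (simp add: has_real_derivative_iff_has_vector_derivative)
  qed
  have I2: "((\<lambda>_. - (1 + Kc Lb)) has_integral (- (1 + Kc Lb)) * (0 - (-a))) {-a..0}"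
    using has_integral_const_real[of "- (1 + Kc Lb)" "-a" 0] a by (simp add: mult.commute)
  have "(- (1 + Kc Lb)) * (0 - (-a)) \<le> f 0 - f (-a)"
    using I2 I1 by (rule has_integral_le) (use sum_dps_ge[where d=d, OF Lb inc] in \<open>simp add: f'_def\<close>)
  moreover have "(\<Sum>j\<le>n. ps Lb (d j - a) - ps Lb (d j)) = f (-a) - f 0"
    by (simp add: f_def sum_subtractf)
  ultimately show ?thesis by (simp add: algebra_simps)
qed


lemma wf_suffix_closed:
  assumes wf: "wfO T" and v: "zs @ w \<in> T"
  shows "w \<in> T"
  using v
proof (induction zs)
  case Nil then show ?case by simp
next
  case (Cons z zs)
  have "\<forall>y v. y # v \<in> T \<longrightarrow> v \<in> T \<and> \<not> starts_dollar v" using wf unfolding wfO_def by blast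
  then have "zs @ w \<in> T" using Cons.prems by auto
  then show ?case by (rule Cons.IH)
qed

lemma chain_leaf_unique:
  assumes wf: "wfO T" and vT: "v \<in> T" and wT: "w \<in> T"
    and sv: "suffix v p" and sw: "suffix w p"
    and lv: "\<not> intO T v" and lw: "\<not> intO T w"
  shows "v = w"
proof (rule ccontr)
  assume ne: "v \<noteq> w"
  have w2: "\<forall>v\<in>T. (\<exists>y. y # v \<in> T) \<longrightarrow> (\<forall>y. y # v \<in> T)" using wf unfolding wfO_def by blast
  have key: "False" if ab: "suffix a b" and ne2: "a \<noteq> b" and aT: "a \<in> T" and bT: "b \<in> T" and la: "\<not> intO T a" for a b
  proof -
    obtain zs where b: "b = zs @ a" using ab unfolding suffix_def by blast
    then have "zs \<noteq> []" using ne2 by auto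
    then obtain zs' y where "zs = zs' @ [y]" by (metis rev_exhaust)
    then have "zs' @ (y # a) \<in> T" using b bT by simp
    then have "y # a \<in> T" by (rule wf_suffix_closed[OF wf])
    then have "intO T a" using w2 aT unfolding intO_def by blast
    then show False using la by simp
  qed
  from suffix_same_cases[OF sv sw] show False
  proof
    assume "suffix v w" then show False using key[of v w] ne vT wT lv by blast
  next
    assume "suffix w v" then show False using key[of w v] ne vT wT lw by blast
  qed
qed

lemma card_leaves_le1:
  assumes wf: "wfO T"
  shows "card {v \<in> G. v \<in> T \<and> suffix v p \<and> \<not> intO T v} \<le> 1"
proof -
  have "\<forall>x\<in>{v \<in> G. v \<in> T \<and> suffix v p \<and> \<not> intO T v}. \<forall>y\<in>{v \<in> G. v \<in> T \<and> suffix v p \<and> \<not> intO T v}. x = y"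
    using chain_leaf_unique[OF wf] by blast
  then show ?thesis
    by (cases "finite {v \<in> G. v \<in> T \<and> suffix v p \<and> \<not> intO T v}") (auto simp: card_le_Suc0_iff_eq)
qed

lemma chain_nodes:
  assumes "suffix v (None # r)" "\<not> starts_dollar v"
  shows "v \<in> (\<lambda>j. drop j r) ` {..length r}"
proof -
  have "v \<noteq> None # r" using assms(2) by (auto simp: starts_dollar_def)
  then have "suffix v r" using assms(1) by (auto simp: suffix_Cons)
  then obtain zs where "r = zs @ v" by (auto simp: suffix_def)
  then have "v = drop (length zs) r" by simp
  moreover have "length zs \<le> length r" using \<open>r = zs @ v\<close> by simp
  ultimately show ?thesis by auto
qed

lemma prod_exp_le:
  fixes m0 m1 h :: "'b \<Rightarrow> real" and c :: real
  assumes fin: "finite G" and le: "\<And>v. v \<in> G \<Longrightarrow> m0 v \<le> exp (h v) * m1 v"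
    and nn0: "\<And>v. v \<in> G \<Longrightarrow> 0 \<le> m0 v" and nn1: "\<And>v. v \<in> G \<Longrightarrow> 0 \<le> m1 v"
    and hs: "(\<Sum>v\<in>G. h v) \<le> c"
  shows "(\<Prod>v\<in>G. m0 v) \<le> exp c * (\<Prod>v\<in>G. m1 v)"
proof -
  have "(\<Prod>v\<in>G. m0 v) \<le> (\<Prod>v\<in>G. exp (h v) * m1 v)"
    by (rule prod_mono) (use le nn0 in auto)
  also have "\<dots> = exp (\<Sum>v\<in>G. h v) * (\<Prod>v\<in>G. m1 v)"
    using fin by (simp add: prod.distrib exp_sum)
  also have "\<dots> \<le> exp c * (\<Prod>v\<in>G. m1 v)"
    by (rule mult_right_mono) (use hs nn1 in \<open>auto intro: prod_nonneg\<close>)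
  finally show ?thesis .
qed


lemma mA:
  assumes lam: "lam > 0"
  shows "measure (laplace lam) (Aset Dx \<theta> \<delta> T v) =
    (if intO T v then Sf ((bias Dx \<theta> \<delta> v - \<theta>) / lam) else Sf ((\<theta> - bias Dx \<theta> \<delta> v) / lam))"
proof (cases "intO T v")
  case True
  have "- (\<theta> - bias Dx \<theta> \<delta> v) / lam = (bias Dx \<theta> \<delta> v - \<theta>) / lam" by (simp add: field_simps)
  then show ?thesis using True lap_gt[OF lam, of "\<theta> - bias Dx \<theta> \<delta> v"] by (simp add: Aset_def)
next
  case False
  have e: "- (\<theta> - bias Dx \<theta> \<delta> v) / lam = - ((\<theta> - bias Dx \<theta> \<delta> v) / lam)" by (rule minus_divide_left[symmetric])
  have "1 - Sf (- (\<theta> - bias Dx \<theta> \<delta> v) / lam) = Sf ((\<theta> - bias Dx \<theta> \<delta> v) / lam)"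
    unfolding e Sf_neg by simp
  then show ?thesis using False lap_le[OF lam, of "\<theta> - bias Dx \<theta> \<delta> v"] by (simp add: Aset_def)
qed

lemma max_div:
  fixes p q \<theta> lam :: real
  assumes lam: "lam > 0"
  shows "(max p q - \<theta>) / lam = max ((p - \<theta>) / lam) ((q - \<theta>) / lam)"
proof -
  have iff: "((p - \<theta>) / lam \<le> (q - \<theta>) / lam) = (p \<le> q)"
  proof
    assume "(p - \<theta>) / lam \<le> (q - \<theta>) / lam"
    then have "(p - \<theta>) / lam * lam \<le> (q - \<theta>) / lam * lam" by (rule mult_right_mono) (use lam in simp)
    then show "p \<le> q" using lam by simp
  next
    assume "p \<le> q" then show "(p - \<theta>) / lam \<le> (q - \<theta>) / lam" by (intro divide_right_mono) (use lam in auto)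
  qed
  show ?thesis unfolding max_def iff by auto
qed

lemma ps_anti: "a \<ge> 0 \<Longrightarrow> ps Lb u \<le> ps Lb (u - a)"
proof -
  assume a: "a \<ge> 0"
  have "Sf (max (- Lb) (u - a)) \<le> Sf (max (- Lb) u)" by (rule Sf_mono) (use a in auto)
  then have "ln (Sf (max (- Lb) (u - a))) \<le> ln (Sf (max (- Lb) u))" using Sf_pos by simp
  then show ?thesis by (simp add: ps_def)
qed

locale stepctx =
  fixes D :: "'a::finite dataset" and s :: "'a sequence" and t :: nat and lam \<theta> \<delta> Lb :: real
  assumes t: "t < length s" and lam: "lam > 0" and Lb: "Lb > 0" and dl: "\<delta> = lam * Lb"
begin

abbreviation "D0 \<equiv> D + {#take t s#}"
abbreviation "D1 \<equiv> D + {#take (Suc t) s#}"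
abbreviation "r \<equiv> take t s"
abbreviation "uu v \<equiv> (score D1 v - real (depth v) * \<delta> - \<theta>) / lam"

lemma b01: "bias D0 \<theta> \<delta> v \<le> bias D1 \<theta> \<delta> v"
  using score_step(1)[OF t, of D v] by (simp add: bias_def)

lemma b10: "bias D1 \<theta> \<delta> v \<le> bias D0 \<theta> \<delta> v + 1"
  using score_step(2)[OF t, of D v] unfolding bias_def by (auto simp: max_def)

lemma boff: "\<not> suffix v (None # r) \<Longrightarrow> bias D1 \<theta> \<delta> v = bias D0 \<theta> \<delta> v"
  using score_step(3)[OF t, of v D] by (simp add: bias_def)

lemma by_lem: "(bias Dx \<theta> \<delta> v - \<theta>) / lam = max (- Lb) ((score Dx v - real (depth v) * \<delta> - \<theta>) / lam)"
proof -
  have "(\<theta> - \<delta> - \<theta>) / lam = - Lb" using lam by (simp add: dl)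
  then show ?thesis unfolding bias_def max_div[OF lam] by simp
qed

lemma nodeA:
  "measure (laplace lam) (Aset D0 \<theta> \<delta> T v) \<le>
     exp (if suffix v (None # r) \<and> \<not> intO T v then 1 / lam else 0) * measure (laplace lam) (Aset D1 \<theta> \<delta> T v)"
proof -
  note m = mA[OF lam]
  have q01: "bias D0 \<theta> \<delta> v / lam \<le> bias D1 \<theta> \<delta> v / lam"
    by (rule divide_right_mono) (use b01 lam in auto)
  have "bias D1 \<theta> \<delta> v / lam \<le> (bias D0 \<theta> \<delta> v + 1) / lam"
    by (rule divide_right_mono) (use b10 lam in auto)
  then have q10: "bias D1 \<theta> \<delta> v / lam \<le> bias D0 \<theta> \<delta> v / lam + 1 / lam"
    by (simp add: add_divide_distrib)
  have y01: "(bias D0 \<theta> \<delta> v - \<theta>) / lam \<le> (bias D1 \<theta> \<delta> v - \<theta>) / lam"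
    unfolding diff_divide_distrib using q01 by linarith
  show ?thesis
  proof (cases "intO T v")
    case True
    have "Sf ((bias D0 \<theta> \<delta> v - \<theta>) / lam) \<le> Sf ((bias D1 \<theta> \<delta> v - \<theta>) / lam)" by (rule Sf_mono[OF y01])
    moreover have "exp (if suffix v (None # r) \<and> \<not> intO T v then 1 / lam else 0) = 1" using True by simp
    ultimately show ?thesis using True by (simp add: m)
  next
    case False
    show ?thesis
    proof (cases "suffix v (None # r)")
      case True
      have "Sf ((\<theta> - bias D0 \<theta> \<delta> v) / lam) \<le> exp (1 / lam) * Sf ((\<theta> - bias D0 \<theta> \<delta> v) / lam - 1 / lam)"
        by (rule Sf_shift) (use lam in simp)
      also have "\<dots> \<le> exp (1 / lam) * Sf ((\<theta> - bias D1 \<theta> \<delta> v) / lam)"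
      proof (rule mult_left_mono)
        show "Sf ((\<theta> - bias D0 \<theta> \<delta> v) / lam - 1 / lam) \<le> Sf ((\<theta> - bias D1 \<theta> \<delta> v) / lam)"
          unfolding diff_divide_distrib by (rule Sf_mono) (use q10 in linarith)
      qed simp
      finally show ?thesis using True False by (simp add: m)
    next
      case False2: False
      then show ?thesis using False boff[OF False2] by (simp add: m)
    qed
  qed
qed

lemma nodeB:
  "measure (laplace lam) (Aset D1 \<theta> \<delta> T v) \<le>
     exp (if suffix v (None # r) \<and> intO T v then ps Lb (uu v - 1 / lam) - ps Lb (uu v) else 0)
       * measure (laplace lam) (Aset D0 \<theta> \<delta> T v)"
proof -
  note m = mA[OF lam]
  have q01: "bias D0 \<theta> \<delta> v / lam \<le> bias D1 \<theta> \<delta> v / lam"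
    by (rule divide_right_mono) (use b01 lam in auto)
  show ?thesis
  proof (cases "intO T v")
    case False
    have "Sf ((\<theta> - bias D1 \<theta> \<delta> v) / lam) \<le> Sf ((\<theta> - bias D0 \<theta> \<delta> v) / lam)"
      unfolding diff_divide_distrib by (rule Sf_mono) (use q01 in linarith)
    then show ?thesis using False by (simp add: m)
  next
    case True
    show ?thesis
    proof (cases "suffix v (None # r)")
      case False
      then show ?thesis using True boff[OF False] by (simp add: m)
    next
      case chain: True
      have y1: "(bias D1 \<theta> \<delta> v - \<theta>) / lam = max (- Lb) (uu v)" by (rule by_lem)
      have "score D1 v \<le> score D0 v + 1" by (rule score_step(2)[OF t])
      then have "uu v - 1 / lam \<le> (score D0 v - real (depth v) * \<delta> - \<theta>) / lam"
        using lam by (simp add: diff_divide_distrib[symmetric] divide_right_mono)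
      then have y0: "max (- Lb) (uu v - 1 / lam) \<le> (bias D0 \<theta> \<delta> v - \<theta>) / lam"
        unfolding by_lem[of D0] by simp
      have "Sf ((bias D1 \<theta> \<delta> v - \<theta>) / lam) = exp (- ps Lb (uu v))"
        unfolding y1 exp_neg_ps ..
      also have "\<dots> = exp (ps Lb (uu v - 1 / lam) - ps Lb (uu v)) * exp (- ps Lb (uu v - 1 / lam))"
        by (simp flip: exp_add)
      also have "\<dots> = exp (ps Lb (uu v - 1 / lam) - ps Lb (uu v)) * Sf (max (- Lb) (uu v - 1 / lam))"
        by (simp add: exp_neg_ps)
      also have "\<dots> \<le> exp (ps Lb (uu v - 1 / lam) - ps Lb (uu v)) * Sf ((bias D0 \<theta> \<delta> v - \<theta>) / lam)"
        by (rule mult_left_mono[OF Sf_mono[OF y0]]) simp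
      finally show ?thesis using True chain by (simp add: m)
    qed
  qed
qed

end


context stepctx
begin

lemma sumA:
  assumes wf: "wfO T"
  shows "(\<Sum>v\<in>GO T k. (if suffix v (None # r) \<and> \<not> intO T v then 1 / lam else 0)) \<le> 1 / lam"
proof -
  let ?P = "\<lambda>v. suffix v (None # r) \<and> \<not> intO T v"
  have "(\<Sum>v\<in>GO T k. (if ?P v then 1 / lam else 0)) = (\<Sum>v\<in>{v \<in> GO T k. ?P v}. 1 / lam)"
    by (rule sum.inter_filter[symmetric]) (rule finite_GO)
  also have "\<dots> = real (card {v \<in> GO T k. ?P v}) * (1 / lam)" by simp
  also have "\<dots> \<le> 1 * (1 / lam)"
  proof (rule mult_right_mono)
    have "{v \<in> GO T k. ?P v} = {v \<in> GO T k. v \<in> T \<and> suffix v (None # r) \<and> \<not> intO T v}"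
      by (auto simp: GO_def)
    then have "card {v \<in> GO T k. ?P v} \<le> 1" using card_leaves_le1[OF wf] by simp
    then show "real (card {v \<in> GO T k. ?P v}) \<le> 1" by simp
  qed (use lam in simp)
  finally show ?thesis by simp
qed

definition dd :: "nat \<Rightarrow> real" where
  "dd j = (if j \<le> length r then uu (drop j r) else uu [] + real (j - length r) * Lb)"

lemma uu_child: "uu (x # w) + Lb \<le> uu w"
proof -
  have sc: "score D1 (x # w) \<le> score D1 w" by (rule score_child)
  have "(score D1 (x # w) - real (depth (x # w)) * \<delta> - \<theta>) + \<delta> \<le> score D1 w - real (depth w) * \<delta> - \<theta>"
    using sc by (simp add: depth_def algebra_simps)
  then have "((score D1 (x # w) - real (depth (x # w)) * \<delta> - \<theta>) + \<delta>) / lam \<le> (score D1 w - real (depth w) * \<delta> - \<theta>) / lam"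
    by (rule divide_right_mono) (use lam in simp)
  moreover have "\<delta> / lam = Lb" using lam by (simp add: dl)
  ultimately show ?thesis by (simp add: add_divide_distrib)
qed

lemma dd_inc: "dd (Suc j) \<ge> dd j + Lb"
proof -
  consider "j < length r" | "j = length r" | "j > length r" by linarith
  then show ?thesis
  proof cases
    case 1
    have "drop j r = r ! j # drop (Suc j) r" using 1 by (rule Cons_nth_drop_Suc[symmetric])
    then have "uu (drop j r) + Lb \<le> uu (drop (Suc j) r)" using uu_child by metis
    then show ?thesis using 1 by (simp add: dd_def)
  next
    case 2
    then have "\<not> Suc j \<le> length r" by simp
    then show ?thesis using 2 by (simp only: dd_def if_False if_True le_refl) simp
  next
    case 3
    have n1: "\<not> j \<le> length r" "\<not> Suc j \<le> length r" using 3 by auto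
    have e1: "dd j = uu [] + real (j - length r) * Lb" by (simp only: dd_def if_not_P[OF n1(1)])
    have e2: "dd (Suc j) = uu [] + real (Suc j - length r) * Lb" by (simp only: dd_def if_not_P[OF n1(2)])
    have "real (Suc j - length r) = real (j - length r) + 1" using 3 by simp
    then show ?thesis unfolding e1 e2 by (simp add: algebra_simps)
  qed
qed

lemma sumB:
  "(\<Sum>v\<in>GO T k. (if suffix v (None # r) \<and> intO T v then ps Lb (uu v - 1 / lam) - ps Lb (uu v) else 0))
    \<le> 1 / lam * (1 + Kc Lb)"
proof -
  define cost where "cost v = ps Lb (uu v - 1 / lam) - ps Lb (uu v)" for v
  define C where "C = (\<lambda>j. drop j r) ` {..length r}"
  have cnn: "0 \<le> cost v" for v unfolding cost_def using ps_anti[of "1 / lam" Lb "uu v"] lam by simp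
  have "(\<Sum>v\<in>GO T k. (if suffix v (None # r) \<and> intO T v then cost v else 0))
      \<le> (\<Sum>v\<in>GO T k. (if v \<in> C then cost v else 0))"
  proof (rule sum_mono)
    fix v assume v: "v \<in> GO T k"
    show "(if suffix v (None # r) \<and> intO T v then cost v else 0) \<le> (if v \<in> C then cost v else 0)"
    proof (cases "suffix v (None # r) \<and> intO T v")
      case True
      then have "v \<in> C" unfolding C_def using v by (intro chain_nodes) (auto simp: GO_def)
      then show ?thesis using True by simp
    qed (auto simp: cnn)
  qed
  also have "\<dots> = (\<Sum>v\<in>{v \<in> GO T k. v \<in> C}. cost v)"
    by (rule sum.inter_filter[symmetric]) (rule finite_GO)
  also have "\<dots> \<le> (\<Sum>v\<in>C. cost v)"
    by (rule sum_mono2) (auto simp: C_def cnn)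
  also have "\<dots> = (\<Sum>j\<le>length r. cost (drop j r))"
  proof -
    have "inj_on (\<lambda>j. drop j r) {..length r}"
    proof (rule inj_onI)
      fix i j assume "i \<in> {..length r}" "j \<in> {..length r}" "drop i r = drop j r"
      then have "length (drop i r) = length (drop j r)" by simp
      then show "i = j" using \<open>i \<in> _\<close> \<open>j \<in> _\<close> by auto
    qed
    then show ?thesis unfolding C_def by (subst sum.reindex) auto
  qed
  also have "\<dots> = (\<Sum>j\<le>length r. ps Lb (dd j - 1 / lam) - ps Lb (dd j))"
    by (rule sum.cong) (auto simp: dd_def cost_def)
  also have "\<dots> \<le> 1 / lam * (1 + Kc Lb)"
    by (rule cost_chain[where d=dd, OF Lb _ dd_inc]) (use lam in simp)
  finally show ?thesis unfolding cost_def .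
qed

lemma stepA:
  "privtree_prob D0 lam \<theta> \<delta> T \<le> exp (1 / lam) * privtree_prob D1 lam \<theta> \<delta> T"
proof (rule ev_transfer[OF lam])
  fix k assume wf: "wfO T"
  show "(\<Prod>v\<in>GO T k. measure (laplace lam) (Aset D0 \<theta> \<delta> T v))
        \<le> exp (1 / lam) * (\<Prod>v\<in>GO T k. measure (laplace lam) (Aset D1 \<theta> \<delta> T v))"
    by (rule prod_exp_le[OF finite_GO nodeA _ _ sumA[OF wf]]) auto
qed

lemma stepB:
  "privtree_prob D1 lam \<theta> \<delta> T \<le> exp (1 / lam * (1 + Kc Lb)) * privtree_prob D0 lam \<theta> \<delta> T"
proof (rule ev_transfer[OF lam])
  fix k assume wf: "wfO T"
  show "(\<Prod>v\<in>GO T k. measure (laplace lam) (Aset D1 \<theta> \<delta> T v))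
        \<le> exp (1 / lam * (1 + Kc Lb)) * (\<Prod>v\<in>GO T k. measure (laplace lam) (Aset D0 \<theta> \<delta> T v))"
    by (rule prod_exp_le[OF finite_GO nodeB _ _ sumB]) auto
qed

end


lemma tree_bias_cong:
  assumes "\<And>v. bias D1 \<theta> \<delta> v = bias D2 \<theta> \<delta> v"
  shows "privtree_tree D1 \<theta> \<delta> \<eta> = privtree_tree D2 \<theta> \<delta> \<eta>"
proof -
  have sub: "privtree_tree A \<theta> \<delta> \<eta> \<subseteq> privtree_tree B \<theta> \<delta> \<eta>" if h: "\<And>v. bias A \<theta> \<delta> v = bias B \<theta> \<delta> v" for A B :: "'a::finite dataset"
  proof
    fix w assume "w \<in> privtree_tree A \<theta> \<delta> \<eta>"
    then show "w \<in> privtree_tree B \<theta> \<delta> \<eta>"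
    proof (induction rule: privtree_tree.induct)
      case root then show ?case by (rule privtree_tree.root)
    next
      case (child w y)
      then show ?case using h[of w] by (intro privtree_tree.child) auto
    qed
  qed
  show ?thesis using sub[of D1 D2] sub[of D2 D1] assms by (metis subset_antisym)
qed

lemma prob_empty_seq: "privtree_prob (D + {#[]#}) lam \<theta> \<delta> T = privtree_prob D lam \<theta> \<delta> T"
proof -
  have "\<And>v. bias (D + {#[]#}) \<theta> \<delta> v = bias D \<theta> \<delta> v" by (simp only: bias_def score_empty_seq)
  then have "\<And>\<eta>. privtree_tree (D + {#[]#}) \<theta> \<delta> \<eta> = privtree_tree D \<theta> \<delta> \<eta>" by (rule tree_bias_cong)
  then show ?thesis unfolding privtree_prob_def by simp
qed

lemma hybridA:
  assumes lam: "lam > 0" and Lb: "Lb > 0" and dl: "\<delta> = lam * Lb"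
  shows "t \<le> length s \<Longrightarrow> privtree_prob (D + {#take 0 s#}) lam \<theta> \<delta> T
           \<le> exp (real t / lam) * privtree_prob (D + {#take t s#}) lam \<theta> \<delta> T"
proof (induction t)
  case 0 then show ?case by simp
next
  case (Suc t)
  interpret stepctx D s t lam \<theta> \<delta> Lb by unfold_locales (use Suc.prems lam Lb dl in auto)
  have "privtree_prob (D + {#take 0 s#}) lam \<theta> \<delta> T \<le> exp (real t / lam) * privtree_prob D0 lam \<theta> \<delta> T"
    using Suc by simp
  also have "\<dots> \<le> exp (real t / lam) * (exp (1 / lam) * privtree_prob D1 lam \<theta> \<delta> T)"
    by (rule mult_left_mono[OF stepA]) simp
  also have "\<dots> = exp (real (Suc t) / lam) * privtree_prob D1 lam \<theta> \<delta> T"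
    by (simp add: add_divide_distrib exp_add)
  finally show ?case .
qed

lemma hybridB:
  assumes lam: "lam > 0" and Lb: "Lb > 0" and dl: "\<delta> = lam * Lb"
  shows "t \<le> length s \<Longrightarrow> privtree_prob (D + {#take t s#}) lam \<theta> \<delta> T
           \<le> exp (real t * (1 / lam * (1 + Kc Lb))) * privtree_prob (D + {#take 0 s#}) lam \<theta> \<delta> T"
proof (induction t)
  case 0 then show ?case by simp
next
  case (Suc t)
  interpret stepctx D s t lam \<theta> \<delta> Lb by unfold_locales (use Suc.prems lam Lb dl in auto)
  have "privtree_prob D1 lam \<theta> \<delta> T \<le> exp (1 / lam * (1 + Kc Lb)) * privtree_prob D0 lam \<theta> \<delta> T"
    by (rule stepB)
  also have "\<dots> \<le> exp (1 / lam * (1 + Kc Lb)) *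
      (exp (real t * (1 / lam * (1 + Kc Lb))) * privtree_prob (D + {#take 0 s#}) lam \<theta> \<delta> T)"
    by (rule mult_left_mono) (use Suc in auto)
  also have "\<dots> = exp (real (Suc t) * (1 / lam * (1 + Kc Lb))) * privtree_prob (D + {#take 0 s#}) lam \<theta> \<delta> T"
  proof -
    have "real (Suc t) * (1 / lam * (1 + Kc Lb)) = 1 / lam * (1 + Kc Lb) + real t * (1 / lam * (1 + Kc Lb))"
      by (simp add: algebra_simps add_divide_distrib)
    then show ?thesis by (simp only: exp_add mult.assoc)
  qed
  finally show ?case .
qed

theorem theorem2:
  fixes L :: nat and \<epsilon> \<theta> lam \<delta> :: real
  assumes "L \<ge> 1" and "\<epsilon> > 0"
    and "lam \<ge> (2 * real (CARD('a::finite) + 1) - 1) / (real (CARD('a) + 1) - 1) * real L / \<epsilon>"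
    and "\<delta> = lam * ln (real (CARD('a) + 1))"
  shows "differentially_private L \<epsilon>
           (\<lambda>(D :: 'a dataset) Out. privtree_prob D lam \<theta> \<delta> Out)"
proof -
  define \<beta> where "\<beta> = real (CARD('a) + 1)"
  define Lb where "Lb = ln \<beta>"
  have b2: "\<beta> \<ge> 2" unfolding \<beta>_def using card_ge_0_finite[of "UNIV :: 'a set"] by simp
  have Lb: "Lb > 0" unfolding Lb_def using b2 by simp
  have dl: "\<delta> = lam * Lb" using assms(4) by (simp add: Lb_def \<beta>_def)
  have Kc: "1 + Kc Lb = (2 * \<beta> - 1) / (\<beta> - 1)"
  proof -
    have e: "exp (- Lb) = 1 / \<beta>" using b2 by (simp add: Lb_def exp_minus inverse_eq_divide)
    show ?thesis unfolding Kc_def e using b2 by (simp add: field_simps)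
  qed
  have C1: "(2 * \<beta> - 1) / (\<beta> - 1) \<ge> 1" using b2 by (simp add: field_simps)
  have lamC: "lam \<ge> (1 + Kc Lb) * real L / \<epsilon>" using assms(3) Kc by (simp add: \<beta>_def)
  have k0: "1 + Kc Lb > 0" using Kc C1 by linarith
  have pos: "(1 + Kc Lb) * real L / \<epsilon> > 0"
    by (intro divide_pos_pos mult_pos_pos k0) (use assms(1,2) in auto)
  have lam: "lam > 0" using lamC pos by linarith
  have budB: "real L * (1 / lam * (1 + Kc Lb)) \<le> \<epsilon>"
  proof -
    have "(1 + Kc Lb) * real L \<le> lam * \<epsilon>" using lamC assms(2) by (simp add: divide_le_eq)
    then show ?thesis using lam by (simp add: field_simps)
  qed
  have budA: "real L / lam \<le> \<epsilon>"
  proof -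
    have k1: "1 \<le> 1 + Kc Lb" using Kc C1 by linarith
    have h: "real L / lam * 1 \<le> real L / lam * (1 + Kc Lb)"
      by (rule mult_left_mono[OF k1]) (use lam in simp)
    have "real L / lam * (1 + Kc Lb) = real L * (1 / lam * (1 + Kc Lb))" by simp
    then show ?thesis using budB h by linarith
  qed
  show ?thesis unfolding differentially_private_def
  proof (intro allI impI)
    fix D D' :: "'a dataset" and Out
    assume "neighboring L D D'"
    then obtain s where s: "seq_len s \<le> L" "D' = D + {#s#} \<or> D = D' + {#s#}"
      unfolding neighboring_def by blast
    have len: "length s \<le> L" using s(1) by (simp add: seq_len_def)
    from s(2) show "(\<lambda>(D :: 'a dataset) Out. privtree_prob D lam \<theta> \<delta> Out) D Out
        \<le> exp \<epsilon> * (\<lambda>(D :: 'a dataset) Out. privtree_prob D lam \<theta> \<delta> Out) D' Out"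
    proof
      assume D': "D' = D + {#s#}"
      have "privtree_prob D lam \<theta> \<delta> Out = privtree_prob (D + {#take 0 s#}) lam \<theta> \<delta> Out"
        using prob_empty_seq[of D lam \<theta> \<delta> Out] by simp
      also have "\<dots> \<le> exp (real (length s) / lam) * privtree_prob (D + {#take (length s) s#}) lam \<theta> \<delta> Out"
        by (rule hybridA[OF lam Lb dl]) simp
      also have "\<dots> \<le> exp \<epsilon> * privtree_prob (D + {#take (length s) s#}) lam \<theta> \<delta> Out"
      proof (rule mult_right_mono)
        have "real (length s) / lam \<le> real L / lam" using len lam by (simp add: divide_right_mono)
        then show "exp (real (length s) / lam) \<le> exp \<epsilon>" using budA by simp
        show "0 \<le> privtree_prob (D + {#take (length s) s#}) lam \<theta> \<delta> Out"
          by (simp add: privtree_prob_def)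
      qed
      finally show ?thesis by (simp add: D')
    next
      assume D: "D = D' + {#s#}"
      have "privtree_prob D lam \<theta> \<delta> Out = privtree_prob (D' + {#take (length s) s#}) lam \<theta> \<delta> Out"
        by (simp add: D)
      also have "\<dots> \<le> exp (real (length s) * (1 / lam * (1 + Kc Lb))) * privtree_prob (D' + {#take 0 s#}) lam \<theta> \<delta> Out"
        by (rule hybridB[OF lam Lb dl]) simp
      also have "\<dots> \<le> exp \<epsilon> * privtree_prob (D' + {#take 0 s#}) lam \<theta> \<delta> Out"
      proof (rule mult_right_mono)
        have "real (length s) * (1 / lam * (1 + Kc Lb)) \<le> real L * (1 / lam * (1 + Kc Lb))"
          by (rule mult_right_mono) (use len lam k0 in auto)
        then show "exp (real (length s) * (1 / lam * (1 + Kc Lb))) \<le> exp \<epsilon>" using budB by simp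
        show "0 \<le> privtree_prob (D' + {#take 0 s#}) lam \<theta> \<delta> Out"
          by (simp add: privtree_prob_def)
      qed
      finally show ?thesis using prob_empty_seq[of D' lam \<theta> \<delta> Out] by simp
    qed
  qed
qed


end
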